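(* Let $0<a<1$ and let $\tau_1,\tau_2:[0,a]\to[0,1]$ be continuously differentiable, strictly increasing maps with $\tau_i(0)=0$, $\tau_i(a)=1$, $\tau_1(x)\le x/a$ and $\tau_2(x)\ge x/a$, such that $\tau_{21}=\tau_2^{-1}\circ\tau_1:[0,a]\to[0,a]$ is continuously differentiable and satisfies $\tau_{21}(x)<x$ for $x\in(0,a)$. Let $0<\widehat a<a$ and $\sigma<1$ be such that $\tau_{21}'(x)\le\sigma$ for $x\in[0,\widehat a]$. Then the unique bounded solution on $[0,\widehat a]$ of the functional equation $$p(x)=p(\tau_{21}(x))\,\tau_{21}'(x)-\left[\tau_{21}'(x)-a\,\tau_1'(x)\right]$$ is given by the convergent series $$p(x)=\sum_{n=0}^\infty B(\tau_{21}^n(x))\,(\tau_{21}^n)'(x),\qquad x\in[0,\widehat a],$$ where $B(x)=a\,\tau_1'(x)-\tau_{21}'(x)$ and $\tau_{21}^n$ denotes the $n$-th iterate. *)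

theory Defs
  imports "HOL-Analysis.Analysis"
begin

definition dwithin :: "real set \<Rightarrow> (real \<Rightarrow> real) \<Rightarrow> real \<Rightarrow> real" where
  "dwithin S f x = vector_derivative f (at x within S)"

definition C1_on :: "real set \<Rightarrow> (real \<Rightarrow> real) \<Rightarrow> bool" where
  "C1_on S f \<longleftrightarrow> (\<forall>x\<in>S. f differentiable (at x within S)) \<and> continuous_on S (dwithin S f)"

end

theory Submission
  imports Defs
begin


lemma Icc_nontriv: "(0::real) < a \<Longrightarrow> x \<in> {0..a} \<Longrightarrow> at x within {0..a} \<noteq> bot"
  by (simp add: trivial_limit_within)

lemma deriv_nonneg_within:
  fixes f :: "real \<Rightarrow> real"
  assumes a: "0 < a" and x: "x \<in> {0..a}" and m: "mono_on {0..a} f"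
    and d: "(f has_real_derivative D) (at x within {0..a})"
  shows "D \<ge> 0"
proof (rule tendsto_lowerbound)
  show "((\<lambda>y. (f y - f x) / (y - x)) \<longlongrightarrow> D) (at x within {0..a})"
    using d by (simp add: has_field_derivative_iff)
  show "at x within {0..a} \<noteq> bot" using Icc_nontriv[OF a x] .
  show "\<forall>\<^sub>F y in at x within {0..a}. 0 \<le> (f y - f x) / (y - x)"
    unfolding eventually_at_filter
  proof (intro always_eventually allI impI)
    fix y assume "y \<noteq> x" "y \<in> {0..a}"
    then show "0 \<le> (f y - f x) / (y - x)" using x m
      by (cases y rule: linorder_cases[of _ x])
         (auto simp: divide_nonpos_neg divide_nonneg_pos mono_onD field_simps intro!: divide_nonpos_neg divide_nonneg_pos)
  qed
qed

theorem proposition3: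
  fixes a ah \<sigma> :: real and \<tau>1 \<tau>2 :: "real \<Rightarrow> real"
  defines "\<tau>21 \<equiv> (\<lambda>x. inv_into {0..a} \<tau>2 (\<tau>1 x))"
  defines "B \<equiv> (\<lambda>x. a * dwithin {0..a} \<tau>1 x - dwithin {0..a} \<tau>21 x)"
  assumes a: "0 < a" "a < 1"
    and maps: "\<tau>1 ` {0..a} \<subseteq> {0..1}" "\<tau>2 ` {0..a} \<subseteq> {0..1}"
    and C1: "C1_on {0..a} \<tau>1" "C1_on {0..a} \<tau>2"
    and mono: "strict_mono_on {0..a} \<tau>1" "strict_mono_on {0..a} \<tau>2"
    and ends: "\<tau>1 0 = 0" "\<tau>2 0 = 0" "\<tau>1 a = 1" "\<tau>2 a = 1"
    and below: "\<forall>x\<in>{0..a}. \<tau>1 x \<le> x / a"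
    and above: "\<forall>x\<in>{0..a}. \<tau>2 x \<ge> x / a"
    and C1_21: "C1_on {0..a} \<tau>21"
    and less: "\<forall>x\<in>{0<..<a}. \<tau>21 x < x"
    and ah: "0 < ah" "ah < a"
    and sig: "\<sigma> < 1" "\<forall>x\<in>{0..ah}. dwithin {0..a} \<tau>21 x \<le> \<sigma>"
  shows "let p = (\<lambda>x. \<Sum>n. B ((\<tau>21 ^^ n) x) * dwithin {0..a} (\<tau>21 ^^ n) x) in
     (\<forall>x\<in>{0..ah}. summable (\<lambda>n. B ((\<tau>21 ^^ n) x) * dwithin {0..a} (\<tau>21 ^^ n) x))
   \<and> bounded (p ` {0..ah})
   \<and> (\<forall>x\<in>{0..ah}. p x = p (\<tau>21 x) * dwithin {0..a} \<tau>21 x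
                            - (dwithin {0..a} \<tau>21 x - a * dwithin {0..a} \<tau>1 x))
   \<and> (\<forall>q. bounded (q ` {0..ah}) \<and>
          (\<forall>x\<in>{0..ah}. q x = q (\<tau>21 x) * dwithin {0..a} \<tau>21 x
                            - (dwithin {0..a} \<tau>21 x - a * dwithin {0..a} \<tau>1 x))
          \<longrightarrow> (\<forall>x\<in>{0..ah}. q x = p x))"
proof -
  define T' where "T' = dwithin {0..a} \<tau>21"
  define P where "P = (\<lambda>n x. \<Prod>k<n. T' ((\<tau>21 ^^ k) x))"
  have cont2: "continuous_on {0..a} \<tau>2"
    using C1(2) unfolding C1_on_def
    by (meson continuous_on_eq_continuous_within differentiable_imp_continuous_within)
  have inj2: "inj_on \<tau>2 {0..a}" using mono(2) strict_mono_on_imp_inj_on by blast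
  have img: "\<tau>1 x \<in> \<tau>2 ` {0..a}" if "x \<in> {0..a}" for x
  proof -
    have "\<tau>1 x \<in> {0..1}" using maps(1) that by blast
    then obtain y where "0 \<le> y" "y \<le> a" "\<tau>2 y = \<tau>1 x"
      using IVT'[of \<tau>2 0 "\<tau>1 x" a] ends cont2 a by auto
    then show ?thesis by force
  qed
  have Tmap: "\<tau>21 x \<in> {0..a}" if "x \<in> {0..a}" for x
    unfolding \<tau>21_def using inv_into_into[OF img[OF that]] .
  have Tinv: "\<tau>2 (\<tau>21 x) = \<tau>1 x" if "x \<in> {0..a}" for x
    unfolding \<tau>21_def using f_inv_into_f[OF img[OF that]] .
  have Tmono: "mono_on {0..a} \<tau>21"
  proof (rule mono_onI)
    fix x y assume xy: "x \<in> {0..a}" "y \<in> {0..a}" "x \<le> y"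
    show "\<tau>21 x \<le> \<tau>21 y"
    proof (rule ccontr)
      assume "\<not> \<tau>21 x \<le> \<tau>21 y"
      then have "\<tau>2 (\<tau>21 y) < \<tau>2 (\<tau>21 x)"
        using mono(2) Tmap xy by (simp add: strict_mono_on_def)
      then have "\<tau>1 y < \<tau>1 x" using Tinv xy by simp
      moreover have "\<tau>1 x \<le> \<tau>1 y" using mono(1) xy
        by (metis order_le_less strict_mono_onD)
      ultimately show False by simp
    qed
  qed
  have T0: "\<tau>21 0 = 0"
    unfolding \<tau>21_def using ends inv_into_f_f[OF inj2, of 0] a by simp
  have Tah: "\<tau>21 x \<in> {0..ah}" if "x \<in> {0..ah}" for x
  proof -
    have xa: "x \<in> {0..a}" using that ah by auto
    have "\<tau>21 x \<le> x"
    proof (cases "x = 0")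
      case True then show ?thesis using T0 by simp
    next
      case False then have "x \<in> {0<..<a}" using that ah by auto
      then show ?thesis using less by force
    qed
    then show ?thesis using Tmap[OF xa] that by auto
  qed
  have Tder: "(\<tau>21 has_vector_derivative T' x) (at x within {0..a})" if "x \<in> {0..a}" for x
    using C1_21 that unfolding C1_on_def T'_def dwithin_def
    by (simp add: vector_derivative_works)
  have T'nn: "T' x \<ge> 0" if "x \<in> {0..a}" for x
    using deriv_nonneg_within[OF a(1) that Tmono] Tder[OF that]
    by (simp add: has_real_derivative_iff_has_vector_derivative)
  have iterA: "(\<tau>21 ^^ n) x \<in> {0..a}" if "x \<in> {0..a}" for n x
    using that by (induction n) (use Tmap in auto)
  have iterH: "(\<tau>21 ^^ n) x \<in> {0..ah}" if "x \<in> {0..ah}" for n x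
    using that by (induction n) (use Tah in auto)
  have iterD: "((\<tau>21 ^^ n) has_vector_derivative P n x) (at x within {0..a})"
    if "x \<in> {0..a}" for n x
  proof (induction n)
    case 0
    then show ?case by (simp add: P_def has_vector_derivative_id)
  next
    case (Suc n)
    have "(\<tau>21 has_vector_derivative T' ((\<tau>21 ^^ n) x)) (at ((\<tau>21 ^^ n) x) within (\<tau>21 ^^ n) ` {0..a})"
      using Tder[OF iterA[OF that]] iterA by (meson has_vector_derivative_within_subset image_subset_iff)
    from vector_diff_chain_within[OF Suc this]
    show ?case by (simp add: P_def mult.commute o_def)
  qed
  have dw: "dwithin {0..a} (\<tau>21 ^^ n) x = P n x" if "x \<in> {0..a}" for n x
    unfolding dwithin_def using vector_derivative_within_closed_interval[OF a(1) that iterD[OF that]] .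
  have sig0: "\<sigma> \<ge> 0"
  proof -
    have "0 \<le> T' 0" using T'nn[of 0] a by simp
    also have "T' 0 \<le> \<sigma>" using sig(2) ah unfolding T'_def by simp
    finally show ?thesis .
  qed
  have Pb: "\<bar>P n x\<bar> \<le> \<sigma> ^ n" if "x \<in> {0..ah}" for n x
  proof -
    have "\<bar>P n x\<bar> = (\<Prod>k<n. \<bar>T' ((\<tau>21 ^^ k) x)\<bar>)" by (simp add: P_def abs_prod)
    also have "\<dots> \<le> (\<Prod>k<n. \<sigma>)"
    proof (rule prod_mono)
      fix k assume "k \<in> {..<n}"
      have h: "(\<tau>21 ^^ k) x \<in> {0..ah}" using iterH that by blast
      then have "(\<tau>21 ^^ k) x \<in> {0..a}" using ah by auto
      then show "0 \<le> \<bar>T' ((\<tau>21 ^^ k) x)\<bar> \<and> \<bar>T' ((\<tau>21 ^^ k) x)\<bar> \<le> \<sigma>"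
        using T'nn sig(2) h unfolding T'_def by auto
    qed
    finally show ?thesis by simp
  qed
  have Bcont: "continuous_on {0..a} B"
    using C1(1) C1_21 unfolding B_def C1_on_def by (intro continuous_intros) auto
  have "bounded (B ` {0..a})"
    by (rule compact_imp_bounded[OF compact_continuous_image[OF Bcont]]) simp
  then obtain M where M: "\<And>y. y \<in> {0..a} \<Longrightarrow> \<bar>B y\<bar> \<le> M"
    unfolding bounded_real by blast
  define f where "f = (\<lambda>x n. B ((\<tau>21 ^^ n) x) * P n x)"
  have fb: "\<bar>f x n\<bar> \<le> M * \<sigma> ^ n" if "x \<in> {0..ah}" for x n
  proof -
    have "(\<tau>21 ^^ n) x \<in> {0..a}" using iterH[OF that, of n] ah by auto
    then have "\<bar>B ((\<tau>21 ^^ n) x)\<bar> \<le> M" by (rule M)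
    then show ?thesis unfolding f_def abs_mult
      by (intro mult_mono Pb that) (auto intro: order_trans[OF abs_ge_zero])
  qed
  have geo: "summable (\<lambda>n. M * \<sigma> ^ n)" using sig0 sig(1) by (intro summable_mult summable_geometric) simp
  have fs: "summable (f x)" if "x \<in> {0..ah}" for x
    by (rule summable_comparison_test'[OF geo, of 0]) (use fb[OF that] in auto)
  have fabs: "\<bar>suminf (f x)\<bar> \<le> (\<Sum>n. M * \<sigma> ^ n)" if "x \<in> {0..ah}" for x
  proof -
    have s: "summable (\<lambda>n. \<bar>f x n\<bar>)"
      by (rule summable_comparison_test'[OF geo, of 0]) (use fb[OF that] in auto)
    have "\<bar>suminf (f x)\<bar> \<le> (\<Sum>n. \<bar>f x n\<bar>)" using summable_rabs[OF s] .
    also have "\<dots> \<le> (\<Sum>n. M * \<sigma> ^ n)" by (rule suminf_le[OF _ s geo]) (use fb[OF that] in auto)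
    finally show ?thesis .
  qed
  define p where "p = (\<lambda>x. \<Sum>n. B ((\<tau>21 ^^ n) x) * dwithin {0..a} (\<tau>21 ^^ n) x)"
  have pf: "p x = suminf (f x)" if "x \<in> {0..ah}" for x
  proof -
    have "x \<in> {0..a}" using that ah by auto
    then show ?thesis unfolding p_def f_def using dw by simp
  qed
  have S1: "\<forall>x\<in>{0..ah}. summable (\<lambda>n. B ((\<tau>21 ^^ n) x) * dwithin {0..a} (\<tau>21 ^^ n) x)"
  proof
    fix x assume x: "x \<in> {0..ah}"
    then have "x \<in> {0..a}" using ah by auto
    then have "(\<lambda>n. B ((\<tau>21 ^^ n) x) * dwithin {0..a} (\<tau>21 ^^ n) x) = f x"
      unfolding f_def using dw by auto
    then show "summable (\<lambda>n. B ((\<tau>21 ^^ n) x) * dwithin {0..a} (\<tau>21 ^^ n) x)" using fs[OF x] by simp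
  qed
  have S2: "bounded (p ` {0..ah})"
    unfolding bounded_real using fabs pf by (intro exI[of _ "\<Sum>n. M * \<sigma> ^ n"]) auto
  have S3: "p x = p (\<tau>21 x) * T' x - (T' x - a * dwithin {0..a} \<tau>1 x)" if x: "x \<in> {0..ah}" for x
  proof -
    have Tx: "\<tau>21 x \<in> {0..ah}" using Tah x .
    have shift: "f x (Suc n) = f (\<tau>21 x) n * T' x" for n
    proof -
      have "P (Suc n) x = T' x * P n (\<tau>21 x)"
        unfolding P_def prod.lessThan_Suc_shift
        by (simp only: funpow_Suc_right o_def funpow_0)
      moreover have "(\<tau>21 ^^ Suc n) x = (\<tau>21 ^^ n) (\<tau>21 x)"
        by (simp only: funpow_Suc_right o_def)
      ultimately show ?thesis unfolding f_def by simp
    qed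
    have "(\<Sum>n. f x (Suc n)) = suminf (f x) - f x 0"
      using suminf_split_head[OF fs[OF x]] .
    moreover have "(\<Sum>n. f x (Suc n)) = suminf (f (\<tau>21 x)) * T' x"
      unfolding shift using suminf_mult2[OF fs[OF Tx]] by simp
    moreover have "f x 0 = B x" by (simp add: f_def P_def)
    ultimately have "suminf (f x) = B x + suminf (f (\<tau>21 x)) * T' x" by simp
    then show ?thesis using pf x Tx unfolding B_def T'_def by simp
  qed
  have S4: "q x = p x" if qb: "bounded (q ` {0..ah})"
    and qe: "\<forall>x\<in>{0..ah}. q x = q (\<tau>21 x) * T' x - (T' x - a * dwithin {0..a} \<tau>1 x)"
    and x: "x \<in> {0..ah}" for q x
  proof -
    define d where "d = (\<lambda>y. q y - p y)"
    have de: "d y = d (\<tau>21 y) * T' y" if "y \<in> {0..ah}" for y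
      using qe[rule_format, OF that] S3[OF that] unfolding d_def by (simp add: algebra_simps)
    have di: "d y = d ((\<tau>21 ^^ n) y) * P n y" if "y \<in> {0..ah}" for n y
    proof (induction n)
      case 0 then show ?case by (simp add: P_def)
    next
      case (Suc n)
      have "d ((\<tau>21 ^^ n) y) = d ((\<tau>21 ^^ Suc n) y) * T' ((\<tau>21 ^^ n) y)"
        using de[OF iterH[OF that]] by simp
      then show ?case using Suc by (simp add: P_def)
    qed
    obtain Kq where Kq: "\<And>y. y \<in> {0..ah} \<Longrightarrow> \<bar>q y\<bar> \<le> Kq" using qb unfolding bounded_real by blast
    obtain Kp where Kp: "\<And>y. y \<in> {0..ah} \<Longrightarrow> \<bar>p y\<bar> \<le> Kp" using S2 unfolding bounded_real by blast
    define K where "K = \<bar>Kq\<bar> + \<bar>Kp\<bar> + 1"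
    have K0: "K > 0" unfolding K_def by simp
    have dK: "\<bar>d y\<bar> \<le> K" if "y \<in> {0..ah}" for y
      using Kq[OF that] Kp[OF that] unfolding d_def K_def by linarith
    have bnd: "\<bar>d x\<bar> \<le> K * \<sigma> ^ n" for n
    proof -
      have "\<bar>d x\<bar> = \<bar>d ((\<tau>21 ^^ n) x)\<bar> * \<bar>P n x\<bar>" using di[OF x, of n] by (simp add: abs_mult)
      also have "\<dots> \<le> K * \<sigma> ^ n"
        by (intro mult_mono dK iterH x Pb) (use K0 in auto)
      finally show ?thesis .
    qed
    have "d x = 0"
    proof (rule ccontr)
      assume "d x \<noteq> 0"
      then have "\<bar>d x\<bar> / K > 0" using K0 by simp
      then obtain n where "\<sigma> ^ n < \<bar>d x\<bar> / K" using real_arch_pow_inv sig(1) by blast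
      then have "K * \<sigma> ^ n < \<bar>d x\<bar>" using K0 by (simp add: field_simps)
      then show False using bnd[of n] by simp
    qed
    then show ?thesis unfolding d_def by simp
  qed
  show ?thesis
    unfolding Let_def p_def[symmetric]
    using S1 S2 S3 S4 unfolding T'_def by blast
qed

end
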